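(* Let $\phi$ be a quantum channel on $\mathcal M(d;\mathbb C)$ with more than $d$ eigenvalues of modulus $1$ counted with multiplicity, i.e. $|\sigma_P(\phi)|>d$. Then $\phi$ is asymptotically entanglement-saving.
   Context: A quantum channel is a completely positive, trace-preserving linear map on $\mathcal M(d;\mathbb C)$, regarded as a linear operator on the $d^2$-dimensional space $\mathcal M(d;\mathbb C)$ for spectral purposes. $|\sigma_P(\phi)|$ is the number of its eigenvalues of modulus $1$ counted with multiplicity. A channel is entanglement-breaking if $(\psi\otimes I)(\rho)$ is separable for every bipartite state $\rho$. $\phi$ is asymptotically entanglement-saving (AES) if no limit point of the sequence $(\phi^n)_{n\in\mathbb N}$ of its powers is entanglement-breaking. *)

theory Defs
  imports Complex_Main "Jordan_Normal_Form.Char_Poly"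
begin

definition psd_mat :: "nat \<Rightarrow> complex mat \<Rightarrow> bool" where
  "psd_mat n A \<longleftrightarrow> A \<in> carrier_mat n n \<and>
     (\<forall>v \<in> carrier_vec n. Im (conjugate v \<bullet> (A *\<^sub>v v)) = 0 \<and> Re (conjugate v \<bullet> (A *\<^sub>v v)) \<ge> 0)"

definition mtrace :: "complex mat \<Rightarrow> complex" where
  "mtrace A = (\<Sum>i<dim_row A. A $$ (i,i))"

definition state_mat :: "nat \<Rightarrow> complex mat \<Rightarrow> bool" where
  "state_mat n A \<longleftrightarrow> psd_mat n A \<and> mtrace A = 1"

(* Kronecker product of an n x n and an m x m matrix; index (i,a) |-> i*m + a *)
definition kron :: "nat \<Rightarrow> nat \<Rightarrow> complex mat \<Rightarrow> complex mat \<Rightarrow> complex mat" where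
  "kron n m A B = mat (n*m) (n*m) (\<lambda>(p,q). A $$ (p div m, q div m) * B $$ (p mod m, q mod m))"

(* (psi \<otimes> id_k) applied to a matrix rho on C^d \<otimes> C^k (dimension d*k) *)
definition tensor_id :: "nat \<Rightarrow> nat \<Rightarrow> (complex mat \<Rightarrow> complex mat) \<Rightarrow> complex mat \<Rightarrow> complex mat" where
  "tensor_id d k \<psi> \<rho> = mat (d*k) (d*k) (\<lambda>(p,q).
      \<psi> (mat d d (\<lambda>(i,j). \<rho> $$ (i*k + p mod k, j*k + q mod k))) $$ (p div k, q div k))"

definition linear_map_mat :: "nat \<Rightarrow> (complex mat \<Rightarrow> complex mat) \<Rightarrow> bool" where
  "linear_map_mat d \<phi> \<longleftrightarrow>
     (\<forall>X \<in> carrier_mat d d. \<phi> X \<in> carrier_mat d d) \<and>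
     (\<forall>X \<in> carrier_mat d d. \<forall>Y \<in> carrier_mat d d. \<phi> (X + Y) = \<phi> X + \<phi> Y) \<and>
     (\<forall>X \<in> carrier_mat d d. \<forall>c. \<phi> (c \<cdot>\<^sub>m X) = c \<cdot>\<^sub>m \<phi> X)"

definition completely_positive :: "nat \<Rightarrow> (complex mat \<Rightarrow> complex mat) \<Rightarrow> bool" where
  "completely_positive d \<phi> \<longleftrightarrow>
     (\<forall>k. \<forall>\<rho>. psd_mat (d*k) \<rho> \<longrightarrow> psd_mat (d*k) (tensor_id d k \<phi> \<rho>))"

definition trace_preserving :: "nat \<Rightarrow> (complex mat \<Rightarrow> complex mat) \<Rightarrow> bool" where
  "trace_preserving d \<phi> \<longleftrightarrow> (\<forall>X \<in> carrier_mat d d. mtrace (\<phi> X) = mtrace X)"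

definition quantum_channel :: "nat \<Rightarrow> (complex mat \<Rightarrow> complex mat) \<Rightarrow> bool" where
  "quantum_channel d \<phi> \<longleftrightarrow> linear_map_mat d \<phi> \<and> completely_positive d \<phi> \<and> trace_preserving d \<phi>"

definition separable_state :: "nat \<Rightarrow> nat \<Rightarrow> complex mat \<Rightarrow> bool" where
  "separable_state d k \<rho> \<longleftrightarrow> (\<exists>(N::nat) (p::nat \<Rightarrow> real) (A::nat \<Rightarrow> complex mat) (B::nat \<Rightarrow> complex mat).
     (\<forall>i<N. p i \<ge> (0::real) \<and> state_mat d (A i) \<and> state_mat k (B i)) \<and>
     (\<Sum>i<N. p i) = 1 \<and>
     \<rho> = mat (d*k) (d*k) (\<lambda>(r,s). \<Sum>i<N. complex_of_real (p i) * kron d k (A i) (B i) $$ (r,s)))"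

definition entanglement_breaking :: "nat \<Rightarrow> (complex mat \<Rightarrow> complex mat) \<Rightarrow> bool" where
  "entanglement_breaking d \<psi> \<longleftrightarrow>
     (\<forall>k. \<forall>\<rho>. state_mat (d*k) \<rho> \<longrightarrow> separable_state d k (tensor_id d k \<psi> \<rho>))"

definition unit_mat :: "nat \<Rightarrow> nat \<Rightarrow> nat \<Rightarrow> complex mat" where
  "unit_mat d a b = mat d d (\<lambda>(i,j). if i = a \<and> j = b then 1 else 0)"

(* matrix of \<phi> as an operator on the d^2-dimensional space M(d;C), w.r.t. the basis of matrix units *)
definition transfer_mat :: "nat \<Rightarrow> (complex mat \<Rightarrow> complex mat) \<Rightarrow> complex mat" where
  "transfer_mat d \<phi> = mat (d*d) (d*d) (\<lambda>(r,s). \<phi> (unit_mat d (s div d) (s mod d)) $$ (r div d, r mod d))"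

definition peripheral_count :: "nat \<Rightarrow> (complex mat \<Rightarrow> complex mat) \<Rightarrow> nat" where
  "peripheral_count d \<phi> =
     (\<Sum>z \<in> {z. poly (char_poly (transfer_mat d \<phi>)) z = 0 \<and> cmod z = 1}.
        order z (char_poly (transfer_mat d \<phi>)))"

(* \<psi> is a limit point of the sequence F (convergence entrywise on M(d;C), i.e. in the
   finite-dimensional space of linear maps) *)
definition limit_point_maps :: "nat \<Rightarrow> (nat \<Rightarrow> complex mat \<Rightarrow> complex mat) \<Rightarrow> (complex mat \<Rightarrow> complex mat) \<Rightarrow> bool" where
  "limit_point_maps d F \<psi> \<longleftrightarrow> (\<exists>r. strict_mono r \<and>
     (\<forall>X \<in> carrier_mat d d. \<forall>i<d. \<forall>j<d. (\<lambda>n. F (r n) X $$ (i,j)) \<longlonglongrightarrow> \<psi> X $$ (i,j)))"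

definition asymptotically_entanglement_saving :: "nat \<Rightarrow> (complex mat \<Rightarrow> complex mat) \<Rightarrow> bool" where
  "asymptotically_entanglement_saving d \<phi> \<longleftrightarrow>
     (\<forall>\<psi>. limit_point_maps d (\<lambda>n. \<phi> ^^ n) \<psi> \<longrightarrow> \<not> entanglement_breaking d \<psi>)"

end

theory Submission
  imports Defs "Jordan_Normal_Form.Schur_Decomposition"
begin


lemma sum_div_mod:
  fixes f :: "nat \<Rightarrow> nat \<Rightarrow> 'a::comm_monoid_add"
  shows "(\<Sum>p<d*k. f (p div k) (p mod k)) = (\<Sum>i<d. \<Sum>a<k. f i a)"
proof (induct d)
  case 0 show ?case by simp
next
  case (Suc d)
  have U: "{..<Suc d * k} = {..<d*k} \<union> (\<lambda>a. d*k+a) ` {..<k}"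
  proof
    show "{..<Suc d * k} \<subseteq> {..<d*k} \<union> (\<lambda>a. d*k+a) ` {..<k}"
    proof
      fix p assume "p \<in> {..<Suc d * k}"
      then have "p < d*k + k" by simp
      show "p \<in> {..<d*k} \<union> (\<lambda>a. d*k+a) ` {..<k}"
      proof (cases "p < d*k")
        case False
        then have "p = d*k + (p - d*k)" "p - d*k < k" using \<open>p < d*k+k\<close> by auto
        then show ?thesis by blast
      qed simp
    qed
  qed auto
  have D: "{..<d*k} \<inter> (\<lambda>a. d*k+a) ` {..<k} = {}" by auto
  have "(\<Sum>p<Suc d*k. f (p div k) (p mod k)) =
      (\<Sum>p<d*k. f (p div k) (p mod k)) + (\<Sum>p\<in>(\<lambda>a. d*k+a) ` {..<k}. f (p div k) (p mod k))"
    unfolding U by (rule sum.union_disjoint) (use D in auto)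
  also have "(\<Sum>p\<in>(\<lambda>a. d*k+a) ` {..<k}. f (p div k) (p mod k)) = (\<Sum>a<k. f ((d*k+a) div k) ((d*k+a) mod k))"
    by (subst sum.reindex) (auto simp: inj_on_def)
  also have "\<dots> = (\<Sum>a<k. f d a)"
    by (rule sum.cong) auto
  finally show ?case using Suc by simp
qed

lemma lin_closed: "linear_map_mat d \<phi> \<Longrightarrow> X \<in> carrier_mat d d \<Longrightarrow> \<phi> X \<in> carrier_mat d d"
  unfolding linear_map_mat_def by blast
lemma lin_add: "linear_map_mat d \<phi> \<Longrightarrow> X \<in> carrier_mat d d \<Longrightarrow> Y \<in> carrier_mat d d \<Longrightarrow> \<phi> (X + Y) = \<phi> X + \<phi> Y"
  unfolding linear_map_mat_def by blast
lemma lin_smult: "linear_map_mat d \<phi> \<Longrightarrow> X \<in> carrier_mat d d \<Longrightarrow> \<phi> (c \<cdot>\<^sub>m X) = c \<cdot>\<^sub>m \<phi> X"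
  unfolding linear_map_mat_def by blast

lemma unit_mat_carrier[simp]: "unit_mat d a b \<in> carrier_mat d d"
  unfolding unit_mat_def by simp

lemma lin_expand_set:
  assumes L: "linear_map_mat d \<phi>" and X: "X \<in> carrier_mat d d" and i: "i < d" and j: "j < d"
    and F: "finite F" "F \<subseteq> {..<d} \<times> {..<d}"
  shows "\<phi> (mat d d (\<lambda>(a,b). if (a,b) \<in> F then X $$ (a,b) else 0)) $$ (i,j)
     = (\<Sum>(a,b)\<in>F. X $$ (a,b) * \<phi> (unit_mat d a b) $$ (i,j))"
  using F
proof (induct F rule: finite_induct)
  case empty
  have e: "mat d d (\<lambda>(a,b). if (a,b) \<in> {} then X $$ (a,b) else 0) = 0 \<cdot>\<^sub>m X"
    by (rule eq_matI) (use X in auto)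
  have "\<phi> (0 \<cdot>\<^sub>m X) $$ (i,j) = 0"
    using lin_smult[OF L X, of 0] lin_closed[OF L X] i j by simp
  then show ?case unfolding e by simp
next
  case (insert p F)
  obtain a b where p: "p = (a,b)" by force
  have ab: "a < d" "b < d" using insert p by auto
  have eq: "mat d d (\<lambda>(x,y). if (x,y) \<in> insert p F then X $$ (x,y) else 0)
     = X $$ (a,b) \<cdot>\<^sub>m unit_mat d a b + mat d d (\<lambda>(x,y). if (x,y) \<in> F then X $$ (x,y) else 0)"
    by (rule eq_matI) (use insert p in \<open>auto simp: unit_mat_def\<close>)
  have c1: "X $$ (a,b) \<cdot>\<^sub>m unit_mat d a b \<in> carrier_mat d d" by simp
  have c2: "mat d d (\<lambda>(x,y). if (x,y) \<in> F then X $$ (x,y) else 0) \<in> carrier_mat d d" by simp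
  have "\<phi> (mat d d (\<lambda>(x,y). if (x,y) \<in> insert p F then X $$ (x,y) else 0)) $$ (i,j)
     = (X $$ (a,b) \<cdot>\<^sub>m \<phi> (unit_mat d a b) + \<phi> (mat d d (\<lambda>(x,y). if (x,y) \<in> F then X $$ (x,y) else 0))) $$ (i,j)"
    unfolding eq lin_add[OF L c1 c2] lin_smult[OF L unit_mat_carrier] by (rule refl)
  also have "\<dots> = X $$ (a,b) * \<phi> (unit_mat d a b) $$ (i,j) + \<phi> (mat d d (\<lambda>(x,y). if (x,y) \<in> F then X $$ (x,y) else 0)) $$ (i,j)"
    using lin_closed[OF L unit_mat_carrier, of a b] lin_closed[OF L c2] i j by simp
  also have "\<dots> = X $$ (a,b) * \<phi> (unit_mat d a b) $$ (i,j) + (\<Sum>(a,b)\<in>F. X $$ (a,b) * \<phi> (unit_mat d a b) $$ (i,j))"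
    by (simp only: insert.hyps(3)[OF conjunct2[OF conjunct2[OF insert.prems[unfolded p, simplified]]]])
  also have "\<dots> = (\<Sum>(a,b)\<in>insert p F. X $$ (a,b) * \<phi> (unit_mat d a b) $$ (i,j))"
    using insert.hyps(1,2) p by simp
  finally show ?case .
qed

lemma lin_expand:
  assumes L: "linear_map_mat d \<phi>" and X: "X \<in> carrier_mat d d" and i: "i < d" and j: "j < d"
  shows "\<phi> X $$ (i,j) = (\<Sum>a<d. \<Sum>b<d. X $$ (a,b) * \<phi> (unit_mat d a b) $$ (i,j))"
proof -
  have "X = mat d d (\<lambda>(a,b). if (a,b) \<in> {..<d} \<times> {..<d} then X $$ (a,b) else 0)"
    by (rule eq_matI) (use X in auto)
  then have "\<phi> X $$ (i,j) = (\<Sum>(a,b)\<in>{..<d} \<times> {..<d}. X $$ (a,b) * \<phi> (unit_mat d a b) $$ (i,j))"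
    using lin_expand_set[OF L X i j, of "{..<d} \<times> {..<d}"] by simp
  also have "\<dots> = (\<Sum>a<d. \<Sum>b<d. X $$ (a,b) * \<phi> (unit_mat d a b) $$ (i,j))"
    by (simp add: sum.cartesian_product)
  finally show ?thesis .
qed

lemma lin_comp: "linear_map_mat d \<phi> \<Longrightarrow> linear_map_mat d \<chi> \<Longrightarrow> linear_map_mat d (\<phi> \<circ> \<chi>)"
  unfolding linear_map_mat_def by auto

lemma lin_id: "linear_map_mat d id"
  unfolding linear_map_mat_def by auto

lemma lin_pow: "linear_map_mat d \<phi> \<Longrightarrow> linear_map_mat d (\<phi> ^^ n)"
  by (induct n) (auto simp: lin_id lin_comp)

lemma transfer_carrier[simp]: "transfer_mat d \<phi> \<in> carrier_mat (d*d) (d*d)"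
  unfolding transfer_mat_def by simp

lemma dim_transfer[simp]: "dim_row (transfer_mat d \<phi>) = d*d" "dim_col (transfer_mat d \<phi>) = d*d"
  unfolding transfer_mat_def by simp_all

lemma div_lt: "(r::nat) < d*d \<Longrightarrow> r div d < d"
  by (simp add: less_mult_imp_div_less)
lemma mod_lt: "(r::nat) < d*d \<Longrightarrow> r mod d < d"
  by (cases "d = 0") auto

lemma transfer_comp:
  assumes L1: "linear_map_mat d \<phi>" and L2: "linear_map_mat d \<chi>"
  shows "transfer_mat d (\<phi> \<circ> \<chi>) = transfer_mat d \<phi> * transfer_mat d \<chi>"
proof (rule eq_matI)
  fix r s assume r: "r < dim_row (transfer_mat d \<phi> * transfer_mat d \<chi>)"
    and s: "s < dim_col (transfer_mat d \<phi> * transfer_mat d \<chi>)"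
  then have r: "r < d*d" and s: "s < d*d" by (auto simp: transfer_mat_def)
  let ?Y = "\<chi> (unit_mat d (s div d) (s mod d))"
  have Y: "?Y \<in> carrier_mat d d" using lin_closed[OF L2] by simp
  have "transfer_mat d (\<phi> \<circ> \<chi>) $$ (r,s) = \<phi> ?Y $$ (r div d, r mod d)"
    using r s by (simp add: transfer_mat_def)
  also have "\<dots> = (\<Sum>a<d. \<Sum>b<d. ?Y $$ (a,b) * \<phi> (unit_mat d a b) $$ (r div d, r mod d))"
    by (rule lin_expand[OF L1 Y div_lt[OF r] mod_lt[OF r]])
  also have "\<dots> = (\<Sum>t<d*d. ?Y $$ (t div d, t mod d) * \<phi> (unit_mat d (t div d) (t mod d)) $$ (r div d, r mod d))"
    by (rule sum_div_mod[symmetric])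
  also have "\<dots> = (transfer_mat d \<phi> * transfer_mat d \<chi>) $$ (r,s)"
    using r s by (auto simp: transfer_mat_def scalar_prod_def intro!: sum.cong
        simp del: div_mult_self1_is_m)
  finally show "transfer_mat d (\<phi> \<circ> \<chi>) $$ (r,s) = (transfer_mat d \<phi> * transfer_mat d \<chi>) $$ (r,s)" .
qed (auto simp: transfer_mat_def)

lemma transfer_id: "transfer_mat d id = 1\<^sub>m (d*d)"
proof (rule eq_matI)
  fix r s assume "r < dim_row (1\<^sub>m (d*d) :: complex mat)" "s < dim_col (1\<^sub>m (d*d) :: complex mat)"
  then have r: "r < d*d" and s: "s < d*d" by auto
  have "(r div d = s div d \<and> r mod d = s mod d) = (r = s)"
    by (metis div_mult_mod_eq)
  then show "transfer_mat d id $$ (r,s) = 1\<^sub>m (d*d) $$ (r,s)"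
    using r s div_lt[OF r] mod_lt[OF r] by (auto simp: transfer_mat_def unit_mat_def)
qed (auto simp: transfer_mat_def)

lemma transfer_pow:
  assumes L: "linear_map_mat d \<phi>"
  shows "transfer_mat d (\<phi> ^^ n) = transfer_mat d \<phi> ^\<^sub>m n"
proof (induct n)
  case 0 show ?case using transfer_id[of d] by (simp add: id_def)
next
  case (Suc n)
  have "transfer_mat d (\<phi> ^^ Suc n) = transfer_mat d ((\<phi> ^^ n) \<circ> \<phi>)" by (simp only: funpow_Suc_right)
  also have "\<dots> = transfer_mat d (\<phi> ^^ n) * transfer_mat d \<phi>" by (rule transfer_comp[OF lin_pow[OF L] L])
  also have "\<dots> = transfer_mat d \<phi> ^\<^sub>m n * transfer_mat d \<phi>" unfolding Suc ..
  finally show ?case by (simp only: pow_mat.simps)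
qed



lemma divmod_aux:
  assumes "a < (k::nat)" shows "(i*k + a) div k = i" "(i*k + a) mod k = a"
  using assms by auto

lemma lt_dk: "i < d \<Longrightarrow> a < (k::nat) \<Longrightarrow> i*k + a < d*k"
proof -
  assume "i < d" "a < k"
  then have "i*k + a < i*k + k" by simp
  also have "\<dots> = (i+1)*k" by simp
  also have "\<dots> \<le> d*k" using \<open>i<d\<close> by (intro mult_right_mono) auto
  finally show ?thesis .
qed

lemma k_pos: "p < d*(k::nat) \<Longrightarrow> 0 < k" by (cases k) auto
lemma p_div_lt: "p < d*(k::nat) \<Longrightarrow> p div k < d"
  by (metis less_mult_imp_div_less mult.commute)

lemma tensor_comp:
  assumes G: "\<forall>X\<in>carrier_mat d d. g X \<in> carrier_mat d d"
  shows "tensor_id d k (f \<circ> g) \<rho> = tensor_id d k f (tensor_id d k g \<rho>)"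
proof (rule eq_matI)
  fix p q assume "p < dim_row (tensor_id d k f (tensor_id d k g \<rho>))"
    "q < dim_col (tensor_id d k f (tensor_id d k g \<rho>))"
  then have p: "p < d*k" and q: "q < d*k" by (auto simp: tensor_id_def)
  have k: "0 < k" using k_pos[OF p] .
  let ?a = "p mod k" and ?b = "q mod k"
  have ab: "?a < k" "?b < k" using k by auto
  let ?B = "mat d d (\<lambda>(i,j). \<rho> $$ (i*k + ?a, j*k + ?b))"
  have gB: "g ?B \<in> carrier_mat d d" by (rule G[rule_format]) simp
  have e: "mat d d (\<lambda>(i,j). tensor_id d k g \<rho> $$ (i*k + ?a, j*k + ?b)) = g ?B"
  proof (rule eq_matI)
    fix i j assume "i < dim_row (g ?B)" "j < dim_col (g ?B)"
    then have i: "i < d" and j: "j < d" using gB by auto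
    show "mat d d (\<lambda>(i,j). tensor_id d k g \<rho> $$ (i*k + ?a, j*k + ?b)) $$ (i,j) = g ?B $$ (i,j)"
      using i j lt_dk[OF i ab(1)] lt_dk[OF j ab(2)] ab
      by (simp add: tensor_id_def divmod_aux)
  qed (use gB in auto)
  show "tensor_id d k (f \<circ> g) \<rho> $$ (p,q) = tensor_id d k f (tensor_id d k g \<rho>) $$ (p,q)"
    using p q e by (simp add: tensor_id_def)
qed (auto simp: tensor_id_def)

lemma tensor_id_id:
  assumes "\<rho> \<in> carrier_mat (d*k) (d*k)"
  shows "tensor_id d k id \<rho> = \<rho>"
proof (rule eq_matI)
  fix p q assume "p < dim_row \<rho>" "q < dim_col \<rho>"
  then have p: "p < d*k" and q: "q < d*k" using assms by auto
  have k: "0 < k" using k_pos[OF p] .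
  show "tensor_id d k id \<rho> $$ (p, q) = \<rho> $$ (p, q)"
    using p q k p_div_lt[OF p] p_div_lt[OF q] by (simp add: tensor_id_def)
qed (use assms in \<open>auto simp: tensor_id_def\<close>)

lemma psd_carrier: "psd_mat n A \<Longrightarrow> A \<in> carrier_mat n n"
  unfolding psd_mat_def by blast

lemma tensor_trace:
  assumes G: "\<forall>X\<in>carrier_mat d d. g X \<in> carrier_mat d d"
    and T: "trace_preserving d g"
    and R: "\<rho> \<in> carrier_mat (d*k) (d*k)"
  shows "mtrace (tensor_id d k g \<rho>) = mtrace \<rho>"
proof -
  let ?B = "\<lambda>a. mat d d (\<lambda>(i,j). \<rho> $$ (i*k + a, j*k + a))"
  have gB: "\<And>a. g (?B a) \<in> carrier_mat d d" by (rule G[rule_format]) simp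
  have gBd: "\<And>a. dim_row (g (?B a)) = d" using gB by blast
  have "mtrace (tensor_id d k g \<rho>) = (\<Sum>p<d*k. g (?B (p mod k)) $$ (p div k, p div k))"
    unfolding mtrace_def by (auto simp: tensor_id_def intro!: sum.cong)
  also have "\<dots> = (\<Sum>i<d. \<Sum>a<k. g (?B a) $$ (i, i))"
    by (rule sum_div_mod)
  also have "\<dots> = (\<Sum>a<k. \<Sum>i<d. g (?B a) $$ (i, i))"
    by (rule sum.swap)
  also have "\<dots> = (\<Sum>a<k. mtrace (g (?B a)))"
    unfolding mtrace_def gBd by (auto simp: mtrace_def intro!: sum.cong)
  also have "\<dots> = (\<Sum>a<k. mtrace (?B a))"
    using T unfolding trace_preserving_def by (auto intro!: sum.cong)
  also have "\<dots> = (\<Sum>a<k. \<Sum>i<d. \<rho> $$ (i*k + a, i*k + a))"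
    by (auto simp: mtrace_def intro!: sum.cong)
  also have "\<dots> = (\<Sum>i<d. \<Sum>a<k. \<rho> $$ (i*k + a, i*k + a))"
    by (rule sum.swap)
  also have "\<dots> = (\<Sum>p<d*k. \<rho> $$ ((p div k)*k + p mod k, (p div k)*k + p mod k))"
    by (rule sum_div_mod[symmetric])
  also have "\<dots> = mtrace \<rho>"
    using R by (simp add: mtrace_def)
  finally show ?thesis .
qed

lemma closed_pow: "linear_map_mat d \<phi> \<Longrightarrow> \<forall>X\<in>carrier_mat d d. (\<phi>^^n) X \<in> carrier_mat d d"
  using lin_closed[OF lin_pow] by blast

lemma cp_pow:
  assumes L: "linear_map_mat d \<phi>" and C: "completely_positive d \<phi>"
  shows "completely_positive d (\<phi> ^^ n)"
proof (induct n)
  case 0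
  show ?case unfolding completely_positive_def
    using tensor_id_id psd_carrier by (metis funpow_0 id_apply eq_id_iff)
next
  case (Suc n)
  show ?case unfolding completely_positive_def
  proof (intro allI impI)
    fix k \<rho> assume "psd_mat (d*k) \<rho>"
    then have "psd_mat (d*k) (tensor_id d k (\<phi>^^n) \<rho>)" using Suc unfolding completely_positive_def by blast
    then have "psd_mat (d*k) (tensor_id d k \<phi> (tensor_id d k (\<phi>^^n) \<rho>))" using C unfolding completely_positive_def by blast
    then show "psd_mat (d*k) (tensor_id d k (\<phi>^^Suc n) \<rho>)"
      using tensor_comp[OF closed_pow[OF L, of n], of k \<phi> \<rho>] by simp
  qed
qed

lemma tp_pow:
  assumes L: "linear_map_mat d \<phi>" and T: "trace_preserving d \<phi>"
  shows "trace_preserving d (\<phi> ^^ n)"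
proof (induct n)
  case (Suc n)
  then show ?case using T closed_pow[OF L, of n] unfolding trace_preserving_def by simp
qed (simp add: trace_preserving_def)

lemma eb_precomp:
  assumes E: "entanglement_breaking d \<psi>"
    and G: "\<forall>X\<in>carrier_mat d d. g X \<in> carrier_mat d d"
    and C: "completely_positive d g" and T: "trace_preserving d g"
  shows "entanglement_breaking d (\<psi> \<circ> g)"
  unfolding entanglement_breaking_def
proof (intro allI impI)
  fix k \<rho> assume S: "state_mat (d*k) \<rho>"
  then have P: "psd_mat (d*k) \<rho>" and tr: "mtrace \<rho> = 1" unfolding state_mat_def by auto
  have "psd_mat (d*k) (tensor_id d k g \<rho>)" using C P unfolding completely_positive_def by blast
  moreover have "mtrace (tensor_id d k g \<rho>) = 1"
    using tensor_trace[OF G T psd_carrier[OF P]] tr by simp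
  ultimately have "state_mat (d*k) (tensor_id d k g \<rho>)" unfolding state_mat_def by simp
  then have "separable_state d k (tensor_id d k \<psi> (tensor_id d k g \<rho>))"
    using E unfolding entanglement_breaking_def by blast
  then show "separable_state d k (tensor_id d k (\<psi> \<circ> g) \<rho>)"
    using tensor_comp[OF G] by simp
qed



lemma sum_two_r:
  fixes f :: "nat \<Rightarrow> complex"
  assumes "a \<noteq> b" "a < n" "b < n"
  shows "(\<Sum>j<n. f j * (if j = a then x else if j = b then y else 0)) = f a * x + f b * y"
proof -
  have "(\<Sum>j<n. f j * (if j = a then x else if j = b then y else 0))
      = (\<Sum>j<n. (if j = a then f j * x else 0) + (if j = b then f j * y else 0))"
    by (rule sum.cong) (use assms in auto)
  also have "\<dots> = f a * x + f b * y" using assms by (simp add: sum.distrib)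
  finally show ?thesis .
qed

lemma sum_two_l:
  fixes f :: "nat \<Rightarrow> complex"
  assumes "a \<noteq> b" "a < n" "b < n"
  shows "(\<Sum>j<n. (if j = a then x else if j = b then y else 0) * f j) = x * f a + y * f b"
  using sum_two_r[OF assms, of f x y] by (simp add: mult.commute)

definition v2 :: "nat \<Rightarrow> nat \<Rightarrow> nat \<Rightarrow> complex \<Rightarrow> complex \<Rightarrow> complex vec" where
  "v2 n a b x y = vec n (\<lambda>i. if i = a then x else if i = b then y else 0)"

lemma quad2:
  fixes A :: "complex mat"
  assumes A: "A \<in> carrier_mat n n" and ab: "a \<noteq> b" "a < n" "b < n"
  shows "conjugate (v2 n a b x y) \<bullet> (A *\<^sub>v v2 n a b x y)
    = cnj x * x * A $$ (a,a) + cnj x * y * A $$ (a,b) + cnj y * x * A $$ (b,a) + cnj y * y * A $$ (b,b)"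
proof -
  have Av: "A *\<^sub>v v2 n a b x y = vec n (\<lambda>i. A $$ (i,a) * x + A $$ (i,b) * y)"
    by (rule eq_vecI) (use A ab in \<open>auto simp: v2_def scalar_prod_def atLeast0LessThan sum_two_r\<close>)
  have "conjugate (v2 n a b x y) \<bullet> (A *\<^sub>v v2 n a b x y)
     = (\<Sum>i<n. (if i = a then cnj x else if i = b then cnj y else 0) * (A $$ (i,a) * x + A $$ (i,b) * y))"
    unfolding Av by (auto simp: v2_def scalar_prod_def atLeast0LessThan intro!: sum.cong)
  also have "\<dots> = cnj x * (A $$ (a,a) * x + A $$ (a,b) * y) + cnj y * (A $$ (b,a) * x + A $$ (b,b) * y)"
    by (rule sum_two_l[OF ab])
  finally show ?thesis by (simp add: algebra_simps)
qed

lemma if_one_mult: "(if P then 1 else 0) * (x::complex) = (if P then x else 0)" by simp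
lemma cnj_if_one: "cnj (if P then 1 else 0) = (if P then 1 else (0::complex))" by simp

lemma quad1:
  fixes A :: "complex mat"
  assumes A: "A \<in> carrier_mat n n" and a: "a < n"
  shows "conjugate (vec n (\<lambda>i. if i = a then 1 else 0)) \<bullet> (A *\<^sub>v vec n (\<lambda>i. if i = a then 1 else 0)) = A $$ (a,a)"
proof -
  have Av: "A *\<^sub>v vec n (\<lambda>i. if i = a then 1 else 0) = vec n (\<lambda>i. A $$ (i,a))"
    by (rule eq_vecI) (use A a in \<open>auto simp: scalar_prod_def atLeast0LessThan mult.commute[of _ "if _ then 1 else 0"] if_one_mult\<close>)
  show ?thesis unfolding Av using a
    by (auto simp: scalar_prod_def atLeast0LessThan if_one_mult cnj_if_one)
qed

lemma psd_form:
  assumes P: "psd_mat n A" and v: "v \<in> carrier_vec n"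
  shows "Im (conjugate v \<bullet> (A *\<^sub>v v)) = 0" "Re (conjugate v \<bullet> (A *\<^sub>v v)) \<ge> 0"
  using assms unfolding psd_mat_def by auto

lemma psd_diag:
  assumes P: "psd_mat n A" and a: "a < n"
  shows "Im (A $$ (a,a)) = 0" "Re (A $$ (a,a)) \<ge> 0"
proof -
  have A: "A \<in> carrier_mat n n" using P unfolding psd_mat_def by blast
  have v: "vec n (\<lambda>i. if i = a then 1 else 0) \<in> carrier_vec n" by simp
  show "Im (A $$ (a,a)) = 0" "Re (A $$ (a,a)) \<ge> 0"
    using psd_form[OF P v] quad1[OF A a] by auto
qed

lemma psd_herm:
  assumes P: "psd_mat n A" and ab: "a < n" "b < n"
  shows "A $$ (b,a) = cnj (A $$ (a,b))"
proof (cases "a = b")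
  case True
  then show ?thesis using psd_diag[OF P ab(1)] by (simp add: complex_eq_iff)
next
  case False
  have A: "A \<in> carrier_mat n n" using P unfolding psd_mat_def by blast
  have v: "\<And>x y. v2 n a b x y \<in> carrier_vec n" by (simp add: v2_def)
  have d: "Im (A $$ (a,a)) = 0" "Im (A $$ (b,b)) = 0" using psd_diag[OF P] ab by auto
  have 1: "Im (A $$ (a,b) + A $$ (b,a)) = 0"
    using psd_form(1)[OF P v[of 1 1]] quad2[OF A False ab, of 1 1] d by simp
  have 2: "Re (A $$ (a,b) - A $$ (b,a)) = 0"
    using psd_form(1)[OF P v[of 1 \<i>]] quad2[OF A False ab, of 1 \<i>] d by simp
  show ?thesis using 1 2 by (simp add: complex_eq_iff)
qed

lemma psd_minor:
  assumes P: "psd_mat n A" and ab: "a < n" "b < n"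
  shows "(cmod (A $$ (a,b)))^2 \<le> Re (A $$ (a,a)) * Re (A $$ (b,b))"
proof (cases "a = b")
  case True
  then show ?thesis using psd_diag[OF P ab(1)]
    by (simp add: cmod_def power2_eq_square)
next
  case False
  have A: "A \<in> carrier_mat n n" using P unfolding psd_mat_def by blast
  have v: "\<And>x y. v2 n a b x y \<in> carrier_vec n" by (simp add: v2_def)
  define c where "c = A $$ (a,b)"
  define N where "N = (cmod c)^2"
  define \<alpha> where "\<alpha> = Re (A $$ (a,a))"
  define \<beta> where "\<beta> = Re (A $$ (b,b))"
  have da: "A $$ (a,a) = of_real \<alpha>" using psd_diag[OF P ab(1)] unfolding \<alpha>_def by (simp add: complex_eq_iff)
  have db: "A $$ (b,b) = of_real \<beta>" using psd_diag[OF P ab(2)] unfolding \<beta>_def by (simp add: complex_eq_iff)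
  have h: "A $$ (b,a) = cnj c" using psd_herm[OF P ab] unfolding c_def .
  have al: "\<alpha> \<ge> 0" "\<beta> \<ge> 0" using psd_diag[OF P] ab unfolding \<alpha>_def \<beta>_def by auto
  have key: "s^2 * \<alpha> - 2 * s * N + N * \<beta> \<ge> 0" for s :: real
  proof -
    have "Re (conjugate (v2 n a b (of_real s) (- cnj c)) \<bullet> (A *\<^sub>v v2 n a b (of_real s) (- cnj c))) \<ge> 0"
      by (rule psd_form(2)[OF P v])
    also have "Re (conjugate (v2 n a b (of_real s) (- cnj c)) \<bullet> (A *\<^sub>v v2 n a b (of_real s) (- cnj c)))
        = s^2 * \<alpha> - 2 * s * N + N * \<beta>"
      unfolding quad2[OF A False ab] da db h c_def[symmetric] N_def
      by (simp add: cmod_def power2_eq_square algebra_simps)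
    finally show ?thesis .
  qed
  have N0: "N \<ge> 0" unfolding N_def by simp
  show ?thesis
  proof (cases "\<alpha> > 0")
    case True
    have "(N/\<alpha>)^2 * \<alpha> - 2 * (N/\<alpha>) * N + N * \<beta> \<ge> 0" by (rule key)
    then have "N * (\<beta> - N/\<alpha>) \<ge> 0" using True by (simp add: power2_eq_square field_simps)
    then have "N = 0 \<or> N/\<alpha> \<le> \<beta>" using N0 by (smt (verit) mult_nonneg_nonpos2 zero_le_mult_iff)
    then have "N \<le> \<alpha> * \<beta>" using True al by (auto simp: field_simps)
    then show ?thesis unfolding N_def c_def \<alpha>_def \<beta>_def .
  next
    case False
    then have a0: "\<alpha> = 0" using al by simp
    have "(\<beta>+1)^2 * \<alpha> - 2 * (\<beta>+1) * N + N * \<beta> \<ge> 0" by (rule key)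
    then have "N * (\<beta> + 2) \<le> 0" using a0 by (simp add: algebra_simps)
    then have "N \<le> 0" using mult_le_0_iff[of N "\<beta>+2"] al by auto
    then show ?thesis unfolding N_def c_def \<alpha>_def \<beta>_def using a0 N0 \<alpha>_def by simp
  qed
qed



lemma state_pair_bound:
  assumes SA: "state_mat n A" and SB: "state_mat n B"
  shows "Re (\<Sum>a<n. \<Sum>b<n. A $$ (a,b) * B $$ (a,b)) \<le> 1"
proof -
  have PA: "psd_mat n A" and PB: "psd_mat n B" using SA SB unfolding state_mat_def by auto
  have cA: "A \<in> carrier_mat n n" and cB: "B \<in> carrier_mat n n" using PA PB unfolding psd_mat_def by auto
  define \<alpha> where "\<alpha> a = Re (A $$ (a,a))" for a
  define \<beta> where "\<beta> a = Re (B $$ (a,a))" for a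
  define \<gamma> where "\<gamma> a = (\<alpha> a + \<beta> a) / 2" for a
  have sa: "(\<Sum>a<n. \<alpha> a) = 1"
  proof -
    have "mtrace A = 1" using SA unfolding state_mat_def by simp
    then have "Re (\<Sum>a<n. A $$ (a,a)) = 1" using cA unfolding mtrace_def by simp
    then show ?thesis unfolding \<alpha>_def by (simp add: Re_sum)
  qed
  have sb: "(\<Sum>a<n. \<beta> a) = 1"
  proof -
    have "mtrace B = 1" using SB unfolding state_mat_def by simp
    then have "Re (\<Sum>a<n. B $$ (a,a)) = 1" using cB unfolding mtrace_def by simp
    then show ?thesis unfolding \<beta>_def by (simp add: Re_sum)
  qed
  have pos: "\<alpha> a \<ge> 0" "\<beta> a \<ge> 0" "\<gamma> a \<ge> 0" if "a < n" for a
    using psd_diag(2)[OF PA that] psd_diag(2)[OF PB that] unfolding \<alpha>_def \<beta>_def \<gamma>_def by auto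
  have ag: "\<alpha> a * \<beta> a \<le> (\<gamma> a)^2" for a
  proof -
    have "0 \<le> (\<alpha> a - \<beta> a)^2" by simp
    then show ?thesis unfolding \<gamma>_def by (simp add: power2_eq_square algebra_simps)
  qed
  have bnd: "cmod (A $$ (a,b) * B $$ (a,b)) \<le> \<gamma> a * \<gamma> b" if ab: "a < n" "b < n" for a b
  proof -
    have m1: "(cmod (A $$ (a,b)))^2 \<le> \<alpha> a * \<alpha> b" using psd_minor[OF PA ab] unfolding \<alpha>_def .
    have m2: "(cmod (B $$ (a,b)))^2 \<le> \<beta> a * \<beta> b" using psd_minor[OF PB ab] unfolding \<beta>_def .
    have "(cmod (A $$ (a,b) * B $$ (a,b)))^2 = (cmod (A $$ (a,b)))^2 * (cmod (B $$ (a,b)))^2"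
      by (simp add: norm_mult power_mult_distrib)
    also have "\<dots> \<le> (\<alpha> a * \<alpha> b) * (\<beta> a * \<beta> b)"
      by (rule mult_mono[OF m1 m2]) (use pos ab in auto)
    also have "\<dots> = (\<alpha> a * \<beta> a) * (\<alpha> b * \<beta> b)" by (simp add: algebra_simps)
    also have "\<dots> \<le> (\<gamma> a)^2 * (\<gamma> b)^2"
      by (rule mult_mono[OF ag ag]) (use pos ab in auto)
    also have "\<dots> = (\<gamma> a * \<gamma> b)^2" by (simp add: power_mult_distrib)
    finally show ?thesis
      by (rule power2_le_imp_le) (use pos ab in auto)
  qed
  have "Re (\<Sum>a<n. \<Sum>b<n. A $$ (a,b) * B $$ (a,b)) = (\<Sum>a<n. \<Sum>b<n. Re (A $$ (a,b) * B $$ (a,b)))"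
    by (simp add: Re_sum)
  also have "\<dots> \<le> (\<Sum>a<n. \<Sum>b<n. \<gamma> a * \<gamma> b)"
    by (intro sum_mono) (use bnd complex_Re_le_cmod order_trans in blast)
  also have "\<dots> = (\<Sum>a<n. \<gamma> a) * (\<Sum>b<n. \<gamma> b)" by (simp add: sum_product)
  also have "(\<Sum>a<n. \<gamma> a) = 1" unfolding \<gamma>_def using sa sb
    by (simp add: sum_divide_distrib[symmetric] sum.distrib)
  finally show ?thesis by simp
qed

definition Phi :: "nat \<Rightarrow> complex mat" where
  "Phi d = mat (d*d) (d*d) (\<lambda>(p,q). if p div d = p mod d \<and> q div d = q mod d then 1 / of_nat d else 0)"

lemma Phi_state:
  assumes d: "d > 0"
  shows "state_mat (d*d) (Phi d)"
proof -
  let ?D = "\<lambda>p. p div d = p mod d"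
  have psd: "psd_mat (d*d) (Phi d)" unfolding psd_mat_def
  proof (intro conjI ballI)
    show "Phi d \<in> carrier_mat (d*d) (d*d)" unfolding Phi_def by simp
  next
    fix v :: "complex vec" assume v: "v \<in> carrier_vec (d*d)"
    define s where "s = (\<Sum>q<d*d. if ?D q then v $ q else 0)"
    have Pv: "Phi d *\<^sub>v v = vec (d*d) (\<lambda>p. if ?D p then (1/of_nat d) * s else 0)"
    proof (rule eq_vecI)
      fix p assume "p < dim_vec (vec (d*d) (\<lambda>p. if ?D p then (1/of_nat d) * s else 0))"
      then have p: "p < d*d" by simp
      have "(Phi d *\<^sub>v v) $ p = (\<Sum>q<d*d. (if ?D p \<and> ?D q then 1 / of_nat d else 0) * v $ q)"
        using p v by (simp add: Phi_def scalar_prod_def atLeast0LessThan)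
      also have "\<dots> = (if ?D p then (1/of_nat d) * s else 0)"
        unfolding s_def by (cases "?D p") (auto simp: sum_distrib_left intro!: sum.cong)
      finally show "(Phi d *\<^sub>v v) $ p = vec (d*d) (\<lambda>p. if ?D p then (1/of_nat d) * s else 0) $ p"
        using p by simp
    qed (use v in \<open>simp add: Phi_def\<close>)
    have "conjugate v \<bullet> (Phi d *\<^sub>v v) = (\<Sum>p<d*d. cnj (v $ p) * (if ?D p then (1/of_nat d) * s else 0))"
      unfolding Pv using v by (simp add: scalar_prod_def atLeast0LessThan)
    also have "\<dots> = (1/of_nat d) * s * (\<Sum>p<d*d. if ?D p then cnj (v $ p) else 0)"
      by (auto simp: sum_distrib_left intro!: sum.cong)
    also have "(\<Sum>p<d*d. if ?D p then cnj (v $ p) else 0) = cnj s"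
      unfolding s_def cnj_sum by (rule sum.cong) auto
    also have "(1/of_nat d) * s * cnj s = of_real ((1/ real d) * (cmod s)^2)"
      using complex_norm_square[of s] by simp
    finally have eq: "conjugate v \<bullet> (Phi d *\<^sub>v v) = of_real ((1/ real d) * (cmod s)^2)" .
    show "Im (conjugate v \<bullet> (Phi d *\<^sub>v v)) = 0" unfolding eq by simp
    show "0 \<le> Re (conjugate v \<bullet> (Phi d *\<^sub>v v))" unfolding eq by simp
  qed
  have "mtrace (Phi d) = (\<Sum>p<d*d. (\<lambda>i a. if i = a then 1 / of_nat d else 0) (p div d) (p mod d))"
    unfolding mtrace_def by (auto simp: Phi_def intro!: sum.cong)
  also have "\<dots> = (\<Sum>i<d. \<Sum>a<d. if i = a then 1 / of_nat d else (0::complex))"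
    by (rule sum_div_mod)
  also have "\<dots> = 1" using d by simp
  finally show ?thesis using psd unfolding state_mat_def by simp
qed



lemma sep_bound_explicit:
  assumes h: "\<forall>i<N. p i \<ge> 0 \<and> state_mat d (A i) \<and> state_mat d (B i)" and sp: "(\<Sum>i<N. p i) = (1::real)"
  shows "Re (\<Sum>a<d. \<Sum>b<d. mat (d*d) (d*d) (\<lambda>(r,s). \<Sum>i<N. complex_of_real (p i) * kron d d (A i) (B i) $$ (r,s)) $$ (a*d + a, b*d + b)) \<le> 1"
proof -
  let ?\<sigma> = "mat (d*d) (d*d) (\<lambda>(r,s). \<Sum>i<N. complex_of_real (p i) * kron d d (A i) (B i) $$ (r,s))"
  have e1: "?\<sigma> $$ (a*d + a, b*d + b) = (\<Sum>i<N. complex_of_real (p i) * (A i $$ (a,b) * B i $$ (a,b)))"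
    if ab: "a < d" "b < d" for a b
    using ab lt_dk[OF ab(1) ab(1)] lt_dk[OF ab(2) ab(2)]
    by (simp add: kron_def divmod_aux)
  have "(\<Sum>a<d. \<Sum>b<d. ?\<sigma> $$ (a*d + a, b*d + b))
     = (\<Sum>a<d. \<Sum>b<d. \<Sum>i<N. complex_of_real (p i) * (A i $$ (a,b) * B i $$ (a,b)))"
    by (simp add: e1)
  also have "\<dots> = (\<Sum>i<N. complex_of_real (p i) * (\<Sum>a<d. \<Sum>b<d. A i $$ (a,b) * B i $$ (a,b)))"
    by (simp add: sum_distrib_left sum.swap[of _ "{..<N}"])
  finally have "Re (\<Sum>a<d. \<Sum>b<d. ?\<sigma> $$ (a*d + a, b*d + b))
     = (\<Sum>i<N. p i * Re (\<Sum>a<d. \<Sum>b<d. A i $$ (a,b) * B i $$ (a,b)))"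
    by (simp add: Re_sum)
  also have "\<dots> \<le> (\<Sum>i<N. p i * 1)"
    by (intro sum_mono mult_left_mono) (use h state_pair_bound in auto)
  finally show ?thesis using sp by simp
qed

lemma sep_bound:
  assumes "separable_state d d \<sigma>"
  shows "Re (\<Sum>a<d. \<Sum>b<d. \<sigma> $$ (a*d + a, b*d + b)) \<le> 1"
  using assms sep_bound_explicit unfolding separable_state_def by auto

lemma eb_bound:
  assumes E: "entanglement_breaking d \<psi>" and d: "d > 0"
    and H: "\<And>a b i j. a < d \<Longrightarrow> b < d \<Longrightarrow> i < d \<Longrightarrow> j < d \<Longrightarrow>
       \<psi> ((1 / of_nat d) \<cdot>\<^sub>m unit_mat d a b) $$ (i,j) = (1 / of_nat d) * \<psi> (unit_mat d a b) $$ (i,j)"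
  shows "Re (\<Sum>a<d. \<Sum>b<d. \<psi> (unit_mat d a b) $$ (a,b)) \<le> real d"
proof -
  define \<sigma> where "\<sigma> = tensor_id d d \<psi> (Phi d)"
  have sep: "separable_state d d \<sigma>"
    using E Phi_state[OF d] unfolding entanglement_breaking_def \<sigma>_def by blast
  have blk: "mat d d (\<lambda>(i,j). Phi d $$ (i*d + a, j*d + b)) = (1 / of_nat d) \<cdot>\<^sub>m unit_mat d a b"
    if ab: "a < d" "b < d" for a b
  proof (rule eq_matI)
    fix i j assume "i < dim_row ((1 / of_nat d) \<cdot>\<^sub>m unit_mat d a b)" "j < dim_col ((1 / of_nat d) \<cdot>\<^sub>m unit_mat d a b)"
    then have i: "i < d" and j: "j < d" by (auto simp: unit_mat_def)
    show "mat d d (\<lambda>(i,j). Phi d $$ (i*d + a, j*d + b)) $$ (i,j) = ((1 / of_nat d) \<cdot>\<^sub>m unit_mat d a b) $$ (i,j)"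
      using i j ab lt_dk[OF i ab(1)] lt_dk[OF j ab(2)]
      by (auto simp: Phi_def unit_mat_def divmod_aux)
  qed (auto simp: unit_mat_def)
  have sig: "\<sigma> $$ (a*d + a, b*d + b) = (1 / of_nat d) * \<psi> (unit_mat d a b) $$ (a,b)"
    if ab: "a < d" "b < d" for a b
    using ab lt_dk[OF ab(1) ab(1)] lt_dk[OF ab(2) ab(2)] blk[OF ab] H[OF ab ab]
    by (simp add: \<sigma>_def tensor_id_def divmod_aux)
  have "(\<Sum>a<d. \<Sum>b<d. \<sigma> $$ (a*d + a, b*d + b)) = (1 / of_nat d) * (\<Sum>a<d. \<Sum>b<d. \<psi> (unit_mat d a b) $$ (a,b))"
    by (simp add: sig sum_distrib_left)
  moreover have "Re (\<Sum>a<d. \<Sum>b<d. \<sigma> $$ (a*d + a, b*d + b)) \<le> 1"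
    by (rule sep_bound[OF sep])
  ultimately have "Re ((1 / of_nat d) * (\<Sum>a<d. \<Sum>b<d. \<psi> (unit_mat d a b) $$ (a,b))) \<le> 1" by simp
  then have "(1 / real d) * Re (\<Sum>a<d. \<Sum>b<d. \<psi> (unit_mat d a b) $$ (a,b)) \<le> 1"
    by (simp add: Re_divide_of_real)
  then show ?thesis using d by (simp add: field_simps)
qed



lemma sum_single_nat:
  fixes f :: "nat \<Rightarrow> 'a::comm_monoid_add"
  assumes "j < n" "\<And>t. t < n \<Longrightarrow> t \<noteq> j \<Longrightarrow> f t = 0"
  shows "(\<Sum>t<n. f t) = f j"
proof -
  have "(\<Sum>t<n. f t) = f j + (\<Sum>t\<in>{..<n} - {j}. f t)"
    using assms(1) by (simp add: sum.remove)
  also have "(\<Sum>t\<in>{..<n} - {j}. f t) = 0" using assms(2) by (intro sum.neutral) auto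
  finally show ?thesis by simp
qed

lemma mult_entry:
  assumes "A \<in> carrier_mat n m" "B \<in> carrier_mat m l" "i < n" "j < l"
  shows "(A * B) $$ (i,j) = (\<Sum>t<m. A $$ (i,t) * B $$ (t,j))"
  using assms by (simp add: scalar_prod_def atLeast0LessThan)

lemma ut_pow:
  fixes B :: "complex mat"
  assumes B: "B \<in> carrier_mat n n" and ut: "upper_triangular B"
  shows "upper_triangular (B ^\<^sub>m k) \<and> (\<forall>j<n. (B ^\<^sub>m k) $$ (j,j) = B $$ (j,j) ^ k)"
proof (induct k)
  case 0 show ?case using B by simp
next
  case (Suc k)
  let ?X = "B ^\<^sub>m k"
  have X: "?X \<in> carrier_mat n n" using B by simp
  have utX: "upper_triangular ?X" and dX: "\<And>j. j < n \<Longrightarrow> ?X $$ (j,j) = B $$ (j,j) ^ k" using Suc by auto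
  have Xz: "?X $$ (i,t) = 0" if "t < i" "i < n" for i t using upper_triangularD[OF utX that(1)] X B that by simp
  have Bz: "B $$ (t,j) = 0" if "j < t" "t < n" for t j using upper_triangularD[OF ut that(1)] B that by simp
  have "upper_triangular (?X * B)"
  proof (rule upper_triangularI)
    fix i j assume ji: "j < i" and i: "i < dim_row (?X * B)"
    then have i: "i < n" using B by simp
    have "(?X * B) $$ (i,j) = (\<Sum>t<n. ?X $$ (i,t) * B $$ (t,j))"
      using mult_entry[OF X B] i ji by simp
    also have "\<dots> = 0"
    proof (intro sum.neutral ballI)
      fix t assume t: "t \<in> {..<n}"
      show "?X $$ (i,t) * B $$ (t,j) = 0"
      proof (cases "t < i")
        case True then show ?thesis using Xz i by simp
      next
        case False then show ?thesis using Bz[of j t] ji t by simp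
      qed
    qed
    finally show "(?X * B) $$ (i,j) = 0" .
  qed
  moreover have "(?X * B) $$ (j,j) = B $$ (j,j) ^ Suc k" if j: "j < n" for j
  proof -
    have "(?X * B) $$ (j,j) = (\<Sum>t<n. ?X $$ (j,t) * B $$ (t,j))"
      using mult_entry[OF X B] j by simp
    also have "\<dots> = ?X $$ (j,j) * B $$ (j,j)"
    proof (rule sum_single_nat[OF j])
      fix t assume t: "t < n" "t \<noteq> j"
      show "?X $$ (j,t) * B $$ (t,j) = 0"
      proof (cases "t < j")
        case True then show ?thesis using Xz j by simp
      next
        case False then show ?thesis using Bz[of j t] t by simp
      qed
    qed
    finally show ?thesis using dX[OF j] by simp
  qed
  ultimately show ?case by simp
qed

lemma mtrace_comm:
  fixes A B :: "complex mat"
  assumes A: "A \<in> carrier_mat n m" and B: "B \<in> carrier_mat m n"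
  shows "mtrace (A * B) = mtrace (B * A)"
proof -
  have "mtrace (A * B) = (\<Sum>i<n. \<Sum>t<m. A $$ (i,t) * B $$ (t,i))"
    unfolding mtrace_def using A B by (auto simp: scalar_prod_def atLeast0LessThan intro!: sum.cong)
  also have "\<dots> = (\<Sum>t<m. \<Sum>i<n. B $$ (t,i) * A $$ (i,t))"
    by (subst sum.swap) (simp add: mult.commute)
  also have "\<dots> = mtrace (B * A)"
    unfolding mtrace_def using A B by (auto simp: scalar_prod_def atLeast0LessThan intro!: sum.cong)
  finally show ?thesis .
qed

lemma count_filter: "P z \<Longrightarrow> count_list (filter P xs) z = count_list xs z"
  by (induct xs) auto

lemma periph_len:
  "(\<Sum>z\<in>{z. z \<in> set xs \<and> P z}. count_list xs z) = length (filter P xs)"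
proof -
  have "(\<Sum>z\<in>{z. z \<in> set xs \<and> P z}. count_list xs z) = (\<Sum>z\<in>{z. z \<in> set xs \<and> P z}. count_list (filter P xs) z)"
    by (rule sum.cong) (auto simp: count_filter)
  also have "\<dots> = length (filter P xs)" by (rule sum_count_set) auto
  finally show ?thesis .
qed

lemma order_lin_prod:
  "Polynomial.order z (\<Prod>a\<leftarrow>es. [:- a, 1:]) = count_list es (z::complex)"
proof -
  have "Polynomial.order z (\<Prod>a\<leftarrow>es. [:- a, 1:]) = sum_list (map (Polynomial.order z) (map (\<lambda>a. [:- a, 1:]) es))"
    by (subst order_prod_list) (auto simp: comp_def)
  also have "\<dots> = count_list es z"
    by (induct es) (auto simp: order_linear')
  finally show ?thesis .
qed

lemma root_lin_prod:
  "poly (\<Prod>a\<leftarrow>es. [:- a, 1:]) z = 0 \<longleftrightarrow> (z::complex) \<in> set es"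
  by (induct es) auto



lemma unit_approx:
  fixes u v w :: complex
  assumes v: "cmod v = 1" and w: "cmod w = 1"
  shows "cmod (u * cnj v * cnj v * w - 1) \<le> cmod (u - w) + 2 * cmod (v - w)"
proof -
  have ww: "w * cnj w = 1" using w by (simp add: complex_norm_square[symmetric])
  have eq: "u * cnj v * cnj v * w - 1 = (u - w) * (cnj v * cnj v * w) + (cnj v - cnj w) * (w * cnj v * w)
      + (cnj v - cnj w) * (w * cnj w * w)"
  proof -
    have "(u - w) * (cnj v * cnj v * w) + (cnj v - cnj w) * (w * cnj v * w) + (cnj v - cnj w) * (w * cnj w * w)
       = u * cnj v * cnj v * w - (w * cnj w) * (w * cnj w)"
      by (simp add: algebra_simps)
    then show ?thesis using ww by simp
  qed
  have n1: "cmod (cnj v * cnj v * w) = 1" "cmod (w * cnj v * w) = 1" "cmod (w * cnj w * w) = 1"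
    using v w by (simp_all add: norm_mult)
  have "cmod (u * cnj v * cnj v * w - 1) \<le> cmod ((u - w) * (cnj v * cnj v * w)) + cmod ((cnj v - cnj w) * (w * cnj v * w))
      + cmod ((cnj v - cnj w) * (w * cnj w * w))"
    unfolding eq by (meson norm_triangle_ineq order_trans add_mono order_refl)
  also have "\<dots> = cmod (u - w) + cmod (v - w) + cmod (v - w)"
    using n1 by (simp add: norm_mult complex_cnj_diff[symmetric] del: complex_cnj_diff)
  finally show ?thesis by simp
qed

lemma conv_pow_bound:
  fixes e w :: complex
  assumes r: "strict_mono r" and c: "(\<lambda>n. e ^ r n) \<longlonglongrightarrow> w"
  shows "cmod e \<le> 1"
proof (rule ccontr)
  assume "\<not> cmod e \<le> 1"
  then have g: "cmod e > 1" by simp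
  from convergent_imp_Bseq[OF convergentI[OF c]] obtain K where K: "K > 0" "\<And>n. norm (e ^ r n) \<le> K"
    by (auto elim: BseqE)
  from real_arch_pow[OF g] obtain n where n: "K < cmod e ^ n" by blast
  have "cmod e ^ n \<le> cmod e ^ r n" using g seq_suble[OF r, of n] by (intro power_increasing) auto
  also have "\<dots> = norm (e ^ r n)" by (simp add: norm_power)
  also have "\<dots> \<le> K" by (rule K)
  finally show False using n by simp
qed

lemma conv_pow_small:
  fixes e w :: complex
  assumes r: "strict_mono r" and c: "(\<lambda>n. e ^ r n) \<longlonglongrightarrow> w" and e: "cmod e < 1"
  shows "w = 0"
proof -
  have "(\<lambda>n. e ^ n) \<longlonglongrightarrow> 0" using e by (rule LIMSEQ_power_zero)
  from LIMSEQ_subseq_LIMSEQ[OF this r] have "(\<lambda>n. e ^ r n) \<longlonglongrightarrow> 0" by (simp add: comp_def)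
  then show ?thesis using c LIMSEQ_unique by blast
qed

lemma conv_pow_unit:
  fixes e w :: complex
  assumes c: "(\<lambda>n. e ^ r n) \<longlonglongrightarrow> w" and e: "cmod e = 1"
  shows "cmod w = 1"
proof -
  have "(\<lambda>n. cmod (e ^ r n)) \<longlonglongrightarrow> cmod w" using c by (rule tendsto_norm)
  moreover have "(\<lambda>n. cmod (e ^ r n)) = (\<lambda>n. 1)" using e by (simp add: norm_power)
  ultimately show ?thesis using LIMSEQ_unique tendsto_const by metis
qed



theorem mainTheorem15:
  fixes d :: nat and \<phi> :: "complex mat \<Rightarrow> complex mat"
  assumes "quantum_channel d \<phi>"
    and "peripheral_count d \<phi> > d"
  shows "asymptotically_entanglement_saving d \<phi>"
  unfolding asymptotically_entanglement_saving_def
proof (intro allI impI notI)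
  note QC = assms(1) and PC = assms(2)
  fix \<psi> assume LP: "limit_point_maps d (\<lambda>n. \<phi> ^^ n) \<psi>" and EB: "entanglement_breaking d \<psi>"
  have L: "linear_map_mat d \<phi>" and C: "completely_positive d \<phi>" and T: "trace_preserving d \<phi>"
    using QC unfolding quantum_channel_def by auto
  from LP obtain r where r: "strict_mono r"
    and conv: "\<And>X i j. X \<in> carrier_mat d d \<Longrightarrow> i < d \<Longrightarrow> j < d \<Longrightarrow>
        (\<lambda>n. (\<phi> ^^ r n) X $$ (i,j)) \<longlonglongrightarrow> \<psi> X $$ (i,j)"
    unfolding limit_point_maps_def by blast
  define M where "M = transfer_mat d \<phi>"
  have Mc: "M \<in> carrier_mat (d*d) (d*d)" unfolding M_def by simp
  obtain es where es: "char_poly M = (\<Prod>a\<leftarrow>es. [:- a, 1:])" and les: "length es = d*d"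
    using char_poly_factorized[OF Mc] by blast
  obtain B P Q where BPQ: "schur_decomposition M es = (B,P,Q)"
    by (cases "schur_decomposition M es") auto
  from schur_decomposition[OF Mc es BPQ] have sim: "similar_mat_wit M B P Q"
    and ut: "upper_triangular B" and dg: "diag_mat B = es" by auto
  have Bc: "B \<in> carrier_mat (d*d) (d*d)" and Pc: "P \<in> carrier_mat (d*d) (d*d)"
    and Qc: "Q \<in> carrier_mat (d*d) (d*d)" and QP: "Q * P = 1\<^sub>m (d*d)"
    using sim Mc unfolding similar_mat_wit_def Let_def by auto
  have esj: "\<And>j. j < d*d \<Longrightarrow> es ! j = B $$ (j,j)"
    using dg Bc by (auto simp: diag_mat_def)
  define J where "J = {j. j < d*d \<and> cmod (es ! j) = 1}"
  have pcJ: "peripheral_count d \<phi> = card J"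
  proof -
    have "peripheral_count d \<phi> = (\<Sum>z\<in>{z. z \<in> set es \<and> cmod z = 1}. count_list es z)"
      unfolding peripheral_count_def M_def[symmetric] es by (simp add: root_lin_prod order_lin_prod)
    also have "\<dots> = length (filter (\<lambda>z. cmod z = 1) es)" by (rule periph_len)
    also have "\<dots> = card J" unfolding J_def length_filter_conv_card les ..
    finally show ?thesis .
  qed
  have fJ: "finite J" unfolding J_def by simp
  have Jsub: "J \<subseteq> {..<d*d}" unfolding J_def by auto
  have dpos: "d > 0"
  proof (rule ccontr)
    assume "\<not> d > 0" then have "d = 0" by simp
    then have "J = {}" unfolding J_def by simp
    then show False using PC pcJ by simp
  qed
  have tr: "(\<Sum>a<d. \<Sum>b<d. (\<phi> ^^ n) (unit_mat d a b) $$ (a,b)) = (\<Sum>j<d*d. es ! j ^ n)" for n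
  proof -
    have "mtrace (transfer_mat d (\<phi> ^^ n)) = (\<Sum>p<d*d. (\<phi> ^^ n) (unit_mat d (p div d) (p mod d)) $$ (p div d, p mod d))"
      unfolding mtrace_def by (auto simp: transfer_mat_def intro!: sum.cong)
    also have "\<dots> = (\<Sum>a<d. \<Sum>b<d. (\<phi> ^^ n) (unit_mat d a b) $$ (a,b))"
      by (rule sum_div_mod)
    finally have "(\<Sum>a<d. \<Sum>b<d. (\<phi> ^^ n) (unit_mat d a b) $$ (a,b)) = mtrace (transfer_mat d (\<phi> ^^ n))" by simp
    also have "transfer_mat d (\<phi> ^^ n) = M ^\<^sub>m n" unfolding M_def by (rule transfer_pow[OF L])
    also have "M ^\<^sub>m n = P * B ^\<^sub>m n * Q" by (rule similar_mat_wit_pow_id[OF sim])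
    also have "mtrace (P * B ^\<^sub>m n * Q) = mtrace (Q * (P * B ^\<^sub>m n))"
      by (rule mtrace_comm) (use Pc Bc Qc in auto)
    also have "Q * (P * B ^\<^sub>m n) = (Q * P) * B ^\<^sub>m n"
      by (rule assoc_mult_mat[symmetric]) (use Pc Bc Qc in auto)
    also have "\<dots> = B ^\<^sub>m n" using QP Bc by simp
    also have "mtrace (B ^\<^sub>m n) = (\<Sum>j<d*d. es ! j ^ n)"
      unfolding mtrace_def using ut_pow[OF Bc ut, of n] Bc esj by (auto intro!: sum.cong)
    finally show ?thesis .
  qed
  define Lm where "Lm u t = \<psi> (unit_mat d (t div d) (t mod d)) $$ (u div d, u mod d)" for u t
  define w where "w j = (\<Sum>t<d*d. (\<Sum>u<d*d. Q $$ (j,u) * Lm u t) * P $$ (t,j))" for j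
  have simB: "similar_mat_wit B M Q P" by (rule similar_mat_wit_sym[OF sim])
  have ent: "(\<lambda>n. es ! j ^ r n) \<longlonglongrightarrow> w j" if j: "j < d*d" for j
  proof -
    have eq: "es ! j ^ k = (\<Sum>t<d*d. (\<Sum>u<d*d. Q $$ (j,u) * (transfer_mat d (\<phi> ^^ k)) $$ (u,t)) * P $$ (t,j))" for k
    proof -
      have "es ! j ^ k = (B ^\<^sub>m k) $$ (j,j)" using ut_pow[OF Bc ut, of k] j esj by simp
      also have "B ^\<^sub>m k = Q * M ^\<^sub>m k * P" by (rule similar_mat_wit_pow_id[OF simB])
      also have "M ^\<^sub>m k = transfer_mat d (\<phi> ^^ k)" unfolding M_def by (rule transfer_pow[OF L, symmetric])
      also have "(Q * transfer_mat d (\<phi> ^^ k) * P) $$ (j,j) = (\<Sum>t<d*d. (Q * transfer_mat d (\<phi> ^^ k)) $$ (j,t) * P $$ (t,j))"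
        by (rule mult_entry) (use Qc Pc j in auto)
      also have "\<dots> = (\<Sum>t<d*d. (\<Sum>u<d*d. Q $$ (j,u) * (transfer_mat d (\<phi> ^^ k)) $$ (u,t)) * P $$ (t,j))"
        by (intro sum.cong refl arg_cong2[where f="(*)"] mult_entry) (use Qc j in auto)
      finally show ?thesis .
    qed
    have tc: "(\<lambda>n. transfer_mat d (\<phi> ^^ r n) $$ (u,t)) \<longlonglongrightarrow> Lm u t" if "u < d*d" "t < d*d" for u t
      using conv[of "unit_mat d (t div d) (t mod d)" "u div d" "u mod d"] that div_lt mod_lt
      by (simp add: transfer_mat_def Lm_def)
    show ?thesis unfolding eq w_def
      by (intro tendsto_sum tendsto_mult tendsto_const tc) auto
  qed
  have wsmall: "w j = 0" if "j < d*d" "j \<notin> J" for j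
  proof -
    have "cmod (es ! j) \<le> 1" by (rule conv_pow_bound[OF r ent[OF that(1)]])
    then have "cmod (es ! j) < 1" using that unfolding J_def by auto
    then show ?thesis by (rule conv_pow_small[OF r ent[OF that(1)]])
  qed
  have wunit: "cmod (w j) = 1" if "j \<in> J" for j
    using conv_pow_unit[OF ent] that unfolding J_def by auto
  have bnd: "Re (\<Sum>j<d*d. es ! j ^ m * w j) \<le> real d" for m
  proof -
    let ?g = "\<phi> ^^ m"
    have Lg: "linear_map_mat d ?g" by (rule lin_pow[OF L])
    have EBg: "entanglement_breaking d (\<psi> \<circ> ?g)"
      by (rule eb_precomp[OF EB closed_pow[OF L] cp_pow[OF L C] tp_pow[OF L T]])
    have hom: "\<psi> (c \<cdot>\<^sub>m Y) $$ (i,j) = c * \<psi> Y $$ (i,j)"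
      if Y: "Y \<in> carrier_mat d d" and i: "i < d" and j: "j < d" for c Y i j
    proof -
      have cY: "c \<cdot>\<^sub>m Y \<in> carrier_mat d d" using Y by simp
      have l1: "(\<lambda>n. (\<phi> ^^ r n) (c \<cdot>\<^sub>m Y) $$ (i,j)) \<longlonglongrightarrow> \<psi> (c \<cdot>\<^sub>m Y) $$ (i,j)" by (rule conv[OF cY i j])
      have e: "(\<phi> ^^ r n) (c \<cdot>\<^sub>m Y) $$ (i,j) = c * (\<phi> ^^ r n) Y $$ (i,j)" for n
        using lin_smult[OF lin_pow[OF L] Y, of "r n" c] lin_closed[OF lin_pow[OF L] Y, of "r n"] i j by simp
      have l2: "(\<lambda>n. c * (\<phi> ^^ r n) Y $$ (i,j)) \<longlonglongrightarrow> c * \<psi> Y $$ (i,j)"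
        by (intro tendsto_mult tendsto_const conv[OF Y i j])
      show ?thesis using l1 l2 LIMSEQ_unique unfolding e by blast
    qed
    have H: "(\<psi> \<circ> ?g) ((1 / of_nat d) \<cdot>\<^sub>m unit_mat d a b) $$ (i,j) = (1 / of_nat d) * (\<psi> \<circ> ?g) (unit_mat d a b) $$ (i,j)"
      if "a < d" "b < d" "i < d" "j < d" for a b i j
      using hom[OF lin_closed[OF Lg unit_mat_carrier] that(3,4)] lin_smult[OF Lg unit_mat_carrier] by simp
    have R: "Re (\<Sum>a<d. \<Sum>b<d. (\<psi> \<circ> ?g) (unit_mat d a b) $$ (a,b)) \<le> real d"
      by (rule eb_bound[OF EBg dpos H])
    have lim1: "(\<lambda>n. \<Sum>a<d. \<Sum>b<d. (\<phi> ^^ r n) (?g (unit_mat d a b)) $$ (a,b))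
        \<longlonglongrightarrow> (\<Sum>a<d. \<Sum>b<d. (\<psi> \<circ> ?g) (unit_mat d a b) $$ (a,b))"
      unfolding comp_def by (intro tendsto_sum conv lin_closed[OF Lg unit_mat_carrier]) auto
    have eqn: "(\<Sum>a<d. \<Sum>b<d. (\<phi> ^^ r n) (?g (unit_mat d a b)) $$ (a,b)) = (\<Sum>j<d*d. es ! j ^ m * es ! j ^ r n)" for n
    proof -
      have "(\<Sum>a<d. \<Sum>b<d. (\<phi> ^^ r n) (?g (unit_mat d a b)) $$ (a,b)) = (\<Sum>a<d. \<Sum>b<d. (\<phi> ^^ (r n + m)) (unit_mat d a b) $$ (a,b))"
        by (simp add: funpow_add)
      also have "\<dots> = (\<Sum>j<d*d. es ! j ^ (r n + m))" by (rule tr)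
      finally show ?thesis by (simp add: power_add mult.commute)
    qed
    have lim2: "(\<lambda>n. \<Sum>j<d*d. es ! j ^ m * es ! j ^ r n) \<longlonglongrightarrow> (\<Sum>j<d*d. es ! j ^ m * w j)"
      by (intro tendsto_sum tendsto_mult tendsto_const ent) auto
    have "(\<Sum>a<d. \<Sum>b<d. (\<psi> \<circ> ?g) (unit_mat d a b) $$ (a,b)) = (\<Sum>j<d*d. es ! j ^ m * w j)"
      using lim1 lim2 LIMSEQ_unique unfolding eqn by blast
    then show ?thesis using R by simp
  qed
  define p where "p = card J"
  have pgt: "p \<ge> d + 1" using PC pcJ unfolding p_def by simp
  have ppos: "real p > 0" using pgt by simp
  define \<delta> where "\<delta> = 1 / (6 * real p)"
  have \<delta>pos: "\<delta> > 0" unfolding \<delta>_def using ppos by simp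
  have ev: "eventually (\<lambda>n. \<forall>j\<in>J. cmod (es ! j ^ r n - w j) < \<delta>) sequentially"
  proof (rule eventually_ball_finite[OF fJ], intro ballI)
    fix j assume "j \<in> J"
    then have "(\<lambda>n. es ! j ^ r n) \<longlonglongrightarrow> w j" using ent Jsub by auto
    then show "eventually (\<lambda>n. cmod (es ! j ^ r n - w j) < \<delta>) sequentially"
      using \<delta>pos by (auto simp: tendsto_iff dist_norm)
  qed
  then obtain K where K: "\<And>n. n \<ge> K \<Longrightarrow> \<forall>j\<in>J. cmod (es ! j ^ r n - w j) < \<delta>"
    unfolding eventually_sequentially by blast
  define a where "a = r K"
  define K' where "K' = max K (2*a+1)"
  define b where "b = r K'"
  have bge: "b > 2*a" using seq_suble[OF r, of K'] unfolding b_def K'_def by auto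
  define m where "m = b - 2*a"
  have mb: "b = m + a + a" using bge unfolding m_def by simp
  have approx: "Re (es ! j ^ m * w j) \<ge> 1 - 3*\<delta>" if j: "j \<in> J" for j
  proof -
    let ?e = "es ! j"
    have e1: "cmod ?e = 1" using j unfolding J_def by simp
    have w1: "cmod (w j) = 1" by (rule wunit[OF j])
    have ua: "cmod (?e ^ a) = 1" using e1 by (simp add: norm_power)
    have db: "cmod (?e ^ b - w j) < \<delta>" using K[of K'] j unfolding b_def K'_def by auto
    have da: "cmod (?e ^ a - w j) < \<delta>" using K[of K] j unfolding a_def by auto
    have aa: "?e ^ a * cnj (?e ^ a) = 1"
    proof -
      have "?e ^ a * cnj (?e ^ a) = of_real ((cmod (?e ^ a))^2)" by (rule complex_norm_square[symmetric])
      also have "\<dots> = 1" using ua by simp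
      finally show ?thesis .
    qed
    have em: "?e ^ m = ?e ^ b * cnj (?e ^ a) * cnj (?e ^ a)"
    proof -
      have eb: "?e ^ b = ?e ^ m * ?e ^ a * ?e ^ a" unfolding mb by (simp only: power_add)
      have "?e ^ b * cnj (?e ^ a) * cnj (?e ^ a) = ?e ^ m * (?e ^ a * cnj (?e ^ a)) * (?e ^ a * cnj (?e ^ a))"
        unfolding eb by (simp only: mult.assoc mult.commute mult.left_commute)
      then show ?thesis unfolding aa by simp
    qed
    have "cmod (?e ^ m * w j - 1) \<le> cmod (?e ^ b - w j) + 2 * cmod (?e ^ a - w j)"
      unfolding em by (rule unit_approx[OF ua w1])
    also have "\<dots> < 3 * \<delta>" using da db by simp
    finally have lt: "cmod (?e ^ m * w j - 1) < 3*\<delta>" .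
    have "1 - Re (?e ^ m * w j) \<le> cmod (?e ^ m * w j - 1)"
      using complex_Re_le_cmod[of "1 - ?e ^ m * w j"] by (simp add: norm_minus_commute)
    then show ?thesis using lt by simp
  qed
  have "(\<Sum>j<d*d. if j \<in> J then 1 - 3*\<delta> else 0) \<le> (\<Sum>j<d*d. Re (es ! j ^ m * w j))"
    by (intro sum_mono) (use approx wsmall in auto)
  also have "\<dots> = Re (\<Sum>j<d*d. es ! j ^ m * w j)" by (simp add: Re_sum)
  also have "\<dots> \<le> real d" by (rule bnd)
  finally have le: "(\<Sum>j<d*d. if j \<in> J then 1 - 3*\<delta> else 0) \<le> real d" .
  have "(\<Sum>j<d*d. if j \<in> J then 1 - 3*\<delta> else 0) = (\<Sum>j\<in>{..<d*d} \<inter> J. 1 - 3*\<delta>)"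
    by (rule sum.inter_restrict[symmetric]) simp
  also have "{..<d*d} \<inter> J = J" using Jsub by auto
  also have "(\<Sum>j\<in>J. 1 - 3*\<delta>) = real p * (1 - 3*\<delta>)" unfolding p_def by simp
  also have "\<dots> = real p - 1/2" unfolding \<delta>_def using ppos by (simp add: field_simps)
  finally have "real p - 1/2 \<le> real d" using le by simp
  then show False using pgt by simp
qed

end
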